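(* Let $Y$ and $W$ be nonempty finite posets and let $n\ge 2$. There is a bijection between \[ O_{\mu(Y,W),n}\ \sqcup\ \bigsqcup_{\substack{a+b=n-1\\ a,b\ge 1}} O_{Y,a}\times O_{W,b} \qquad\text{and}\qquad \bigsqcup_{\substack{c+d=n\\ c,d\ge 1}} O_{Y,c}\times O_{W,d}. \] In particular $\Omega(\mu(Y,W),n)+\sum_{a+b=n-1}\Omega(Y,a)\Omega(W,b)=\sum_{c+d=n}\Omega(Y,c)\Omega(W,d)$.
   Context: For $n\ge1$, $\langle n\rangle$ denotes the chain $1<2<\dots<n$. For a finite poset $X$, $O_{X,n}$ is the set of strict order preserving maps $f:X\to\langle n\rangle$ (i.e. $u<v$ in $X$ implies $f(u)<f(v)$), and $\Omega(X,n)=|O_{X,n}|$. For finite posets $Y,W$, the concatenation $\mu(Y,W)$ is the poset on the disjoint union of $Y$ and $W$, keeping the orders of $Y$ and $W$, and additionally declaring every element of $Y$ smaller than every element of $W$. *)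

theory Defs
  imports Main "HOL-Library.FuncSet"
begin

(* A finite poset is a carrier set X together with a (reflexive) partial order r on X
   (partial_order_on X r, so r \<subseteq> X \<times> X). *)

definition strict_lt :: "'a rel \<Rightarrow> 'a \<Rightarrow> 'a \<Rightarrow> bool" where
  "strict_lt r u v \<longleftrightarrow> (u, v) \<in> r \<and> u \<noteq> v"

definition OX :: "'a set \<Rightarrow> 'a rel \<Rightarrow> nat \<Rightarrow> ('a \<Rightarrow> nat) set" where
  "OX X r n = {f \<in> X \<rightarrow>\<^sub>E {1..n}. \<forall>u\<in>X. \<forall>v\<in>X. strict_lt r u v \<longrightarrow> f u < f v}"

definition Omega :: "'a set \<Rightarrow> 'a rel \<Rightarrow> nat \<Rightarrow> nat" where
  "Omega X r n = card (OX X r n)"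

(* concatenation \<mu>(Y,W): carrier is the disjoint union, every element of Y below every element of W *)
definition concat_carrier :: "'a set \<Rightarrow> 'b set \<Rightarrow> ('a + 'b) set" where
  "concat_carrier Y W = Inl ` Y \<union> Inr ` W"

definition concat_rel :: "'a set \<Rightarrow> 'a rel \<Rightarrow> 'b set \<Rightarrow> 'b rel \<Rightarrow> ('a + 'b) rel" where
  "concat_rel Y r W s =
     map_prod Inl Inl ` r \<union> map_prod Inr Inr ` s \<union> (Inl ` Y \<times> Inr ` W)"

end

theory Submission
  imports Defs
begin

lemma sl_LL[simp]: "strict_lt (concat_rel Y r W s) (Inl u) (Inl v) = strict_lt r u v"
  by (auto simp: strict_lt_def concat_rel_def)
lemma sl_RR[simp]: "strict_lt (concat_rel Y r W s) (Inr u) (Inr v) = strict_lt s u v"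
  by (auto simp: strict_lt_def concat_rel_def)
lemma sl_LR[simp]: "strict_lt (concat_rel Y r W s) (Inl u) (Inr v) = (u \<in> Y \<and> v \<in> W)"
  by (auto simp: strict_lt_def concat_rel_def)
lemma sl_RL[simp]: "strict_lt (concat_rel Y r W s) (Inr u) (Inl v) = False"
  by (auto simp: strict_lt_def concat_rel_def)

lemma OX_concat:
  "f \<in> OX (concat_carrier Y W) (concat_rel Y r W s) n \<longleftrightarrow>
    (\<forall>x. x \<notin> concat_carrier Y W \<longrightarrow> f x = undefined) \<and>
    (\<forall>y\<in>Y. f (Inl y) \<in> {1..n}) \<and> (\<forall>w\<in>W. f (Inr w) \<in> {1..n}) \<and>
    (\<forall>u\<in>Y. \<forall>v\<in>Y. strict_lt r u v \<longrightarrow> f (Inl u) < f (Inl v)) \<and>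
    (\<forall>u\<in>W. \<forall>v\<in>W. strict_lt s u v \<longrightarrow> f (Inr u) < f (Inr v)) \<and>
    (\<forall>u\<in>Y. \<forall>w\<in>W. f (Inl u) < f (Inr w))"
  unfolding OX_def concat_carrier_def PiE_def Pi_def extensional_def
  by auto

lemma OX_iff:
  "f \<in> OX X r n \<longleftrightarrow> (\<forall>x. x \<notin> X \<longrightarrow> f x = undefined) \<and> (\<forall>x\<in>X. f x \<in> {1..n}) \<and>
     (\<forall>u\<in>X. \<forall>v\<in>X. strict_lt r u v \<longrightarrow> f u < f v)"
  unfolding OX_def PiE_def Pi_def extensional_def by auto

lemma finite_OX: "finite X \<Longrightarrow> finite (OX X r n)"
  unfolding OX_def by (rule finite_subset[of _ "X \<rightarrow>\<^sub>E {1..n}"]) (auto intro: finite_PiE)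

theorem proposition2p1:
  fixes Y :: "'a set" and r :: "'a rel" and W :: "'b set" and s :: "'b rel" and n :: nat
  assumes "finite Y" "Y \<noteq> {}" "partial_order_on Y r"
      and "finite W" "W \<noteq> {}" "partial_order_on W s"
      and "n \<ge> 2"
  shows "(\<exists>h. bij_betw h
            (OX (concat_carrier Y W) (concat_rel Y r W s) n
               <+> (SIGMA a:{1..n-2}. OX Y r a \<times> OX W s (n - 1 - a)))
            (SIGMA c:{1..n-1}. OX Y r c \<times> OX W s (n - c)))
       \<and> Omega (concat_carrier Y W) (concat_rel Y r W s) n
           + (\<Sum>a\<in>{1..n-2}. Omega Y r a * Omega W s (n - 1 - a))
         = (\<Sum>c\<in>{1..n-1}. Omega Y r c * Omega W s (n - c))"
proof -
  let ?C = "OX (concat_carrier Y W) (concat_rel Y r W s) n"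
  let ?A = "?C <+> (SIGMA a:{1..n-2}. OX Y r a \<times> OX W s (n - 1 - a))"
  let ?B = "SIGMA c:{1..n-1}. OX Y r c \<times> OX W s (n - c)"
  define M where "M f = Max ((\<lambda>y. f (Inl y)) ` Y)" for f :: "'a + 'b \<Rightarrow> nat"
  define h where "h x = (case x of Inl f \<Rightarrow> (M f, (\<lambda>y. if y\<in>Y then f (Inl y) else undefined),
        (\<lambda>w. if w\<in>W then f (Inr w) - M f else undefined)) | Inr (a,g) \<Rightarrow> (a+1, g))"
    for x :: "('a + 'b \<Rightarrow> nat) + (nat \<times> ('a \<Rightarrow> nat) \<times> ('b \<Rightarrow> nat))"
  define comb where "comb g1 g2 c = (\<lambda>x. case x of Inl y \<Rightarrow> if y\<in>Y then g1 y else undefined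
        | Inr w \<Rightarrow> if w\<in>W then g2 w + c else undefined)"
    for g1 :: "'a \<Rightarrow> nat" and g2 :: "'b \<Rightarrow> nat" and c :: nat
  define k where "k = (\<lambda>(c,g1,g2). if c \<in> g1 ` Y then Inl (comb g1 g2 c)
        else (Inr (c-1,(g1,g2)) :: ('a + 'b \<Rightarrow> nat) + (nat \<times> ('a \<Rightarrow> nat) \<times> ('b \<Rightarrow> nat))))"
  have Mprops: "M f \<in> (\<lambda>y. f (Inl y)) ` Y" "\<And>y. y \<in> Y \<Longrightarrow> f (Inl y) \<le> M f" for f
    unfolding M_def using assms(1,2) by auto
  have hA: "h x \<in> ?B" if "x \<in> ?A" for x
  proof (cases x)
    case (Inl f)
    with that have f: "f \<in> ?C" by auto
    obtain y0 where y0: "y0 \<in> Y" "M f = f (Inl y0)" using Mprops(1)[of f] by auto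
    obtain w0 where w0: "w0 \<in> W" using assms(5) by auto
    have lt: "M f < f (Inr w)" if "w \<in> W" for w using f y0 that unfolding OX_concat by auto
    have "M f \<in> {1..n-1}" using f y0 lt[OF w0] w0 unfolding OX_concat by fastforce
    moreover have "(\<lambda>y. if y\<in>Y then f (Inl y) else undefined) \<in> OX Y r (M f)"
      using f[unfolded OX_concat] Mprops(2)[of _ f] unfolding OX_iff by auto
    moreover have "(\<lambda>w. if w\<in>W then f (Inr w) - M f else undefined) \<in> OX W s (n - M f)"
      unfolding OX_iff
    proof (intro conjI ballI allI impI)
      fix u v assume uv: "u \<in> W" "v \<in> W" "strict_lt s u v"
      then have "f (Inr u) < f (Inr v)" using f[unfolded OX_concat] by auto
      then show "(if u\<in>W then f (Inr u) - M f else undefined) < (if v\<in>W then f (Inr v) - M f else undefined)"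
        using uv lt[of u] by simp
    next
      fix x assume "x \<in> W"
      then show "(if x\<in>W then f (Inr x) - M f else undefined) \<in> {1..n - M f}"
        using f[unfolded OX_concat] lt[of x] by auto
    qed auto
    ultimately show ?thesis using Inl by (simp add: h_def)
  next
    case (Inr p)
    then obtain a g1 g2 where p: "x = Inr (a,g1,g2)" by (cases p) auto
    with that have a: "a \<in> {1..n-2}" "g1 \<in> OX Y r a" "g2 \<in> OX W s (n-1-a)" by auto
    have "g1 \<in> OX Y r (a+1)" using a(2) unfolding OX_iff by auto
    moreover have "n - 1 - a = n - (a+1)" by simp
    ultimately show ?thesis using a p assms(7) by (auto simp: h_def)
  qed
  have kB: "k y \<in> ?A" if "y \<in> ?B" for y
  proof -
    obtain c g1 g2 where y: "y = (c,g1,g2)" by (cases y) auto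
    with that have c: "c \<in> {1..n-1}" "g1 \<in> OX Y r c" "g2 \<in> OX W s (n-c)" by auto
    show ?thesis
    proof (cases "c \<in> g1 ` Y")
      case True
      have "comb g1 g2 c \<in> ?C"
        using c unfolding OX_concat OX_iff comb_def concat_carrier_def
        by (auto split: sum.splits) (fastforce+)
      then show ?thesis using True y by (simp add: k_def InlI del: OX_def)
    next
      case False
      obtain y0 where "y0 \<in> Y" using assms(2) by auto
      then have "g1 y0 \<ge> 1" "g1 y0 \<le> c" "g1 y0 \<noteq> c" using c False unfolding OX_iff by auto
      then have c2: "c \<ge> 2" by linarith
      have ne: "\<forall>x\<in>Y. g1 x \<noteq> c" using False by auto
      have "g1 \<in> OX Y r (c-1)" using c(2) ne unfolding OX_iff by fastforce
      moreover have "n - 1 - (c - 1) = n - c" using c2 by simp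
      ultimately show ?thesis using False y c c2 by (auto simp: k_def)
    qed
  qed
  have kh: "k (h x) = x" if "x \<in> ?A" for x
  proof (cases x)
    case (Inl f)
    with that have f: "f \<in> ?C" by auto
    have lt: "M f < f (Inr w)" if "w \<in> W" for w
      using f Mprops(1)[of f] that unfolding OX_concat by auto
    have "M f \<in> (\<lambda>y. if y\<in>Y then f (Inl y) else undefined) ` Y"
      using Mprops(1)[of f] by auto
    moreover have "comb (\<lambda>y. if y\<in>Y then f (Inl y) else undefined)
        (\<lambda>w. if w\<in>W then f (Inr w) - M f else undefined) (M f) = f"
    proof
      fix z show "comb (\<lambda>y. if y\<in>Y then f (Inl y) else undefined)
        (\<lambda>w. if w\<in>W then f (Inr w) - M f else undefined) (M f) z = f z"
      proof (cases z)
        case (Inl y) then show ?thesis using f[unfolded OX_concat]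
          unfolding comb_def concat_carrier_def by auto
      next
        case (Inr w) then show ?thesis using f[unfolded OX_concat] lt[of w]
          unfolding comb_def concat_carrier_def by auto
      qed
    qed
    ultimately show ?thesis using Inl by (simp add: h_def k_def)
  next
    case (Inr p)
    then obtain a g1 g2 where p: "x = Inr (a,g1,g2)" by (cases p) auto
    with that have a: "g1 \<in> OX Y r a" by auto
    then have "a + 1 \<notin> g1 ` Y" unfolding OX_iff by force
    then show ?thesis using p by (simp add: h_def k_def)
  qed
  have hk: "h (k y) = y" if "y \<in> ?B" for y
  proof -
    obtain c g1 g2 where y: "y = (c,g1,g2)" by (cases y) auto
    with that have c: "c \<in> {1..n-1}" "g1 \<in> OX Y r c" "g2 \<in> OX W s (n-c)" by auto
    show ?thesis
    proof (cases "c \<in> g1 ` Y")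
      case True
      have Mc: "M (comb g1 g2 c) = c"
        unfolding M_def comb_def using True c(2) assms(1) unfolding OX_iff
        by (auto intro!: Max_eqI)
      have e1: "(\<lambda>y. if y\<in>Y then g1 y else undefined) = g1" using c(2) unfolding OX_iff by auto
      have e2: "(\<lambda>w. if w\<in>W then g2 w + c - c else undefined) = g2" using c(3) unfolding OX_iff by auto
      have cL: "comb g1 g2 c (Inl y') = (if y'\<in>Y then g1 y' else undefined)" for y'
        by (simp add: comb_def)
      have cR: "comb g1 g2 c (Inr w) = (if w\<in>W then g2 w + c else undefined)" for w
        by (simp add: comb_def)
      have "h (Inl (comb g1 g2 c)) = (c, g1, g2)"
        unfolding h_def sum.case Mc cL cR using e1 e2 by (simp cong: if_cong)
      then show ?thesis using True y by (simp add: k_def)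
    next
      case False
      obtain y0 where "y0 \<in> Y" using assms(2) by auto
      then have "g1 y0 \<ge> 1" "g1 y0 \<le> c" "g1 y0 \<noteq> c" using c False unfolding OX_iff by auto
      then have "c \<ge> 2" by linarith
      then show ?thesis using False y by (simp add: k_def h_def)
    qed
  qed
  have bij: "bij_betw h ?A ?B"
  proof (rule bij_betw_byWitness[where f'=k])
    show "\<forall>a\<in>?A. k (h a) = a" using kh by blast
    show "\<forall>a\<in>?B. h (k a) = a" using hk by blast
    show "h ` ?A \<subseteq> ?B" using hA by blast
    show "k ` ?B \<subseteq> ?A" using kB by blast
  qed
  have fin: "finite ?C" "finite (SIGMA a:{1..n-2}. OX Y r a \<times> OX W s (n - 1 - a))"
    using assms(1,4) by (auto simp: finite_OX concat_carrier_def)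
  have "card ?A = card ?B" using bij by (rule bij_betw_same_card)
  then have "card ?C + (\<Sum>a\<in>{1..n-2}. card (OX Y r a \<times> OX W s (n - 1 - a)))
      = (\<Sum>c\<in>{1..n-1}. card (OX Y r c \<times> OX W s (n - c)))"
    using fin assms(1,4) by (simp add: card_Plus finite_OX)
  then have "Omega (concat_carrier Y W) (concat_rel Y r W s) n
           + (\<Sum>a\<in>{1..n-2}. Omega Y r a * Omega W s (n - 1 - a))
         = (\<Sum>c\<in>{1..n-1}. Omega Y r c * Omega W s (n - c))"
    by (simp add: Omega_def card_cartesian_product)
  with bij show ?thesis by blast
qed

end
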